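(* Let $\mathfrak{H}$ be a Hoffman graph in which every slim vertex has exactly one fat neighbour, and suppose $\mathcal{S}(\mathfrak{H})$ is isomorphic to $\mathcal{Q}_{p,q,r}$ for some non-negative integers $p,q,r$ with $p+q\le r$. Then $\mathfrak{H}$ is an induced Hoffman subgraph of a Hoffman graph $\mathfrak{H}'$ with $V^s(\mathfrak{H}')=V^s(\mathfrak{H})$ that has a decomposition $\{\mathfrak{H}^i\}_{i=1}^r$ in which every $\mathfrak{H}^i$ is isomorphic to $\mathfrak{H}_{\rm XVI}$, $\mathfrak{H}_{\rm XVII}$, or $\mathfrak{H}_{\rm II}$. In particular, if $r\ge2$ then $\mathfrak{H}$ is $(-1-\tau)$-reducible, where $\tau=\frac{1+\sqrt5}{2}$.
   Context: A Hoffman graph $\mathfrak{H}$ is a finite simple graph $H$ together with a labeling of each vertex as slim or fat, such that every fat vertex is adjacent to at least one slim vertex and the fat vertices are pairwise non-adjacent. $V^s(\mathfrak{H})$ denotes the set of slim vertices and $N^f_{\mathfrak{H}}(x)$ the set of fat neighbours of $x$. Isomorphisms of Hoffman graphs are graph isomorphisms preserving labels. An induced Hoffman subgraph is a Hoffman graph whose underlying graph is an induced subgraph with inherited labels. Writing the adjacency matrix of $H$ with fat vertices last as $\begin{pmatrix}A_s & C\\ C^T & O\end{pmatrix}$, set $B(\mathfrak{H})=A_s-CC^T$; $\lambda_{\min}(\mathfrak{H})$ is its smallest eigenvalue. A decomposition of $\mathfrak{H}$ is a family $\{\mathfrak{H}^i\}_{i=1}^n$ of induced Hoffman subgraphs such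 that: (i) $V(\mathfrak{H})=\bigcup_i V(\mathfrak{H}^i)$; (ii) slim vertex sets of distinct members are disjoint; (iii) if $x\in V^s(\mathfrak{H}^i)$ and $y$ is a fat neighbour of $x$ in $\mathfrak{H}$, then $y\in V(\mathfrak{H}^i)$; (iv) if $x\in V^s(\mathfrak{H}^i)$, $y\in V^s(\mathfrak{H}^j)$, $i\neq j$, then $|N^f_{\mathfrak{H}}(x)\cap N^f_{\mathfrak{H}}(y)|\le 1$, with equality iff $x,y$ are adjacent. For $\alpha<0$, a Hoffman graph $\mathfrak{H}$ with $\lambda_{\min}(\mathfrak{H})\ge\alpha$ is $\alpha$-reducible if there exist a Hoffman graph $\mathfrak{H}'$ containing $\mathfrak{H}$ as an induced Hoffman subgraph and a decomposition $\{\mathfrak{H}^1,\mathfrak{H}^2\}$ of $\mathfrak{H}'$ with $\lambda_{\min}(\mathfrak{H}^i)\ge\alpha$ and $V^s(\mathfrak{H}^i)\cap V^s(\mathfrak{H})\ne\emptyset$ for $i=1,2$. The special graph $\mathcal{S}(\mathfrak{H})$ is the edge-signed graph with vertex set $V^s(\mathfrak{H})$ in which distinct $u,v$ are joined by a $(+)$-edge iff adjacent in $\mathfrak{H}$ with no common fat neighbour, by a $(-)$-edge iff non-adjacent in $\mathfrak{H}$ with a common fat neighbour, and not joined otherwise. For $p+q\le r$, $\mathcal{Q}_{p,q,r}$ is the edge-signed graph with vertex set a disjoint union $V_p\cup V_q\cup V_r$ of sizes $p,q,r$, with disjoint $U_p,U_q\subseteq V_r$ of sizes $p,q$ and bijections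 $\sigma:V_p\to U_p$, $\rho:V_q\to U_q$; $(+)$-edges: all pairs of distinct vertices of $V_r$ and all $\{v,\sigma(v)\}$, $v\in V_p$; $(-)$-edges: all $\{v,\rho(v)\}$, $v\in V_q$; no other edges. Named Hoffman graphs: $\mathfrak{H}_{\rm II}$ has one slim vertex $v$, two fat vertices $f_1,f_2$, edges $\{v,f_1\},\{v,f_2\}$. $\mathfrak{H}_{\rm XVI}$ has slim vertices $v_1,v_2$, fat vertices $f_1,f_2,f_3$, edges $\{v_1,v_2\},\{v_1,f_1\},\{v_1,f_2\},\{v_2,f_3\}$. $\mathfrak{H}_{\rm XVII}$ has slim vertices $v_1,v_2$, fat vertices $f_1,f_2$, edges $\{v_1,f_1\},\{v_1,f_2\},\{v_2,f_2\}$. *)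

theory Defs
  imports Complex_Main
begin

record 'a hgraph =
  hverts :: "'a set"
  hfat :: "'a set"
  hadj :: "'a \<Rightarrow> 'a \<Rightarrow> bool"

definition slim :: "('a, 'b) hgraph_scheme \<Rightarrow> 'a set" where
  "slim H = hverts H - hfat H"

definition fat_nbrs :: "('a, 'b) hgraph_scheme \<Rightarrow> 'a \<Rightarrow> 'a set" where
  "fat_nbrs H x = {f \<in> hfat H. hadj H x f}"

definition hoffman_graph :: "'a hgraph \<Rightarrow> bool" where
  "hoffman_graph H \<longleftrightarrow>
     finite (hverts H) \<and> hfat H \<subseteq> hverts H \<and>
     (\<forall>x y. hadj H x y \<longrightarrow> x \<in> hverts H \<and> y \<in> hverts H) \<and>
     (\<forall>x y. hadj H x y \<longrightarrow> hadj H y x) \<and>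
     (\<forall>x. \<not> hadj H x x) \<and>
     (\<forall>f \<in> hfat H. \<exists>x \<in> slim H. hadj H f x) \<and>
     (\<forall>f \<in> hfat H. \<forall>g \<in> hfat H. \<not> hadj H f g)"

definition hiso :: "'a hgraph \<Rightarrow> 'b hgraph \<Rightarrow> bool" where
  "hiso G K \<longleftrightarrow> (\<exists>f. bij_betw f (hverts G) (hverts K) \<and>
      (\<forall>x \<in> hverts G. x \<in> hfat G \<longleftrightarrow> f x \<in> hfat K) \<and>
      (\<forall>x \<in> hverts G. \<forall>y \<in> hverts G. hadj G x y \<longleftrightarrow> hadj K (f x) (f y)))"

definition induced_hsub :: "'a hgraph \<Rightarrow> 'a hgraph \<Rightarrow> bool" where
  "induced_hsub K G \<longleftrightarrow> hoffman_graph K \<and> hverts K \<subseteq> hverts G \<and>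
     hfat K = hfat G \<inter> hverts K \<and>
     (\<forall>x y. hadj K x y \<longleftrightarrow> (x \<in> hverts K \<and> y \<in> hverts K \<and> hadj G x y))"

text \<open>The matrix B(H) = A_s - C C^T, indexed by the slim vertices.\<close>
definition Bmat :: "'a hgraph \<Rightarrow> 'a \<Rightarrow> 'a \<Rightarrow> real" where
  "Bmat H x y = (if hadj H x y then 1 else 0) - real (card (fat_nbrs H x \<inter> fat_nbrs H y))"

definition is_eigenvalue_on :: "'a set \<Rightarrow> ('a \<Rightarrow> 'a \<Rightarrow> real) \<Rightarrow> real \<Rightarrow> bool" where
  "is_eigenvalue_on S M \<mu> \<longleftrightarrow> (\<exists>v :: 'a \<Rightarrow> real. (\<exists>x \<in> S. v x \<noteq> 0) \<and>
      (\<forall>x \<in> S. (\<Sum>y \<in> S. M x y * v y) = \<mu> * v x))"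

definition lambda_min :: "'a hgraph \<Rightarrow> real" where
  "lambda_min H = Min {\<mu>. is_eigenvalue_on (slim H) (Bmat H) \<mu>}"

definition decomposition :: "'a hgraph \<Rightarrow> 'i set \<Rightarrow> ('i \<Rightarrow> 'a hgraph) \<Rightarrow> bool" where
  "decomposition G I Hs \<longleftrightarrow>
     (\<forall>i \<in> I. induced_hsub (Hs i) G) \<and>
     hverts G = (\<Union>i \<in> I. hverts (Hs i)) \<and>
     (\<forall>i \<in> I. \<forall>j \<in> I. i \<noteq> j \<longrightarrow> slim (Hs i) \<inter> slim (Hs j) = {}) \<and>
     (\<forall>i \<in> I. \<forall>x \<in> slim (Hs i). \<forall>y \<in> hfat G. hadj G x y \<longrightarrow> y \<in> hverts (Hs i)) \<and>
     (\<forall>i \<in> I. \<forall>j \<in> I. i \<noteq> j \<longrightarrow> (\<forall>x \<in> slim (Hs i). \<forall>y \<in> slim (Hs j).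
         card (fat_nbrs G x \<inter> fat_nbrs G y) \<le> 1 \<and>
         (card (fat_nbrs G x \<inter> fat_nbrs G y) = 1 \<longleftrightarrow> hadj G x y)))"

definition reducible :: "real \<Rightarrow> 'a hgraph \<Rightarrow> bool" where
  "reducible \<alpha> H \<longleftrightarrow> lambda_min H \<ge> \<alpha> \<and>
     (\<exists>H' Hs. hoffman_graph H' \<and> induced_hsub H H' \<and>
        decomposition H' {1::nat, 2} Hs \<and>
        (\<forall>i \<in> {1::nat, 2}. lambda_min (Hs i) \<ge> \<alpha> \<and> slim (Hs i) \<inter> slim H \<noteq> {}))"

record 'a sgraph =
  sverts :: "'a set"
  spos :: "'a \<Rightarrow> 'a \<Rightarrow> bool"
  sneg :: "'a \<Rightarrow> 'a \<Rightarrow> bool"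

definition sgraph_iso :: "'a sgraph \<Rightarrow> 'b sgraph \<Rightarrow> bool" where
  "sgraph_iso S T \<longleftrightarrow> (\<exists>f. bij_betw f (sverts S) (sverts T) \<and>
      (\<forall>x \<in> sverts S. \<forall>y \<in> sverts S.
         (spos S x y \<longleftrightarrow> spos T (f x) (f y)) \<and> (sneg S x y \<longleftrightarrow> sneg T (f x) (f y))))"

definition special_graph :: "'a hgraph \<Rightarrow> 'a sgraph" where
  "special_graph H = \<lparr> sverts = slim H,
     spos = (\<lambda>u v. u \<in> slim H \<and> v \<in> slim H \<and> u \<noteq> v \<and> hadj H u v \<and>
                    fat_nbrs H u \<inter> fat_nbrs H v = {}),
     sneg = (\<lambda>u v. u \<in> slim H \<and> v \<in> slim H \<and> u \<noteq> v \<and> \<not> hadj H u v \<and>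
                    fat_nbrs H u \<inter> fat_nbrs H v \<noteq> {}) \<rparr>"

text \<open>A concrete copy of Q_{p,q,r} on nat: V_r = {0..<r}, U_p = {0..<p},
  U_q = {p..<p+q}, V_p = {r..<r+p} with sigma(r+i) = i,
  V_q = {r+p..<r+p+q} with rho(r+p+i) = p+i.\<close>
definition Qgraph :: "nat \<Rightarrow> nat \<Rightarrow> nat \<Rightarrow> nat sgraph" where
  "Qgraph p q r = \<lparr> sverts = {0..<r+p+q},
     spos = (\<lambda>u v. (u < r \<and> v < r \<and> u \<noteq> v) \<or>
                    (r \<le> u \<and> u < r+p \<and> v = u - r) \<or>
                    (r \<le> v \<and> v < r+p \<and> u = v - r)),
     sneg = (\<lambda>u v. (r+p \<le> u \<and> u < r+p+q \<and> v = u - r) \<or>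
                    (r+p \<le> v \<and> v < r+p+q \<and> u = v - r)) \<rparr>"

definition edges_adj :: "(nat \<times> nat) list \<Rightarrow> nat \<Rightarrow> nat \<Rightarrow> bool" where
  "edges_adj es x y \<longleftrightarrow> (x, y) \<in> set es \<or> (y, x) \<in> set es"

definition H_II :: "nat hgraph" where
  "H_II = \<lparr> hverts = {0,1,2}, hfat = {1,2}, hadj = edges_adj [(0,1),(0,2)] \<rparr>"

definition H_XVI :: "nat hgraph" where
  "H_XVI = \<lparr> hverts = {0,1,2,3,4}, hfat = {2,3,4},
     hadj = edges_adj [(0,1),(0,2),(0,3),(1,4)] \<rparr>"

definition H_XVII :: "nat hgraph" where
  "H_XVII = \<lparr> hverts = {0,1,2,3}, hfat = {2,3},
     hadj = edges_adj [(0,2),(0,3),(1,3)] \<rparr>"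

definition golden_tau :: real where
  "golden_tau = (1 + sqrt 5) / 2"

end

theory Submission
  imports Defs "Jordan_Normal_Form.Spectral_Radius"
begin


lemma eig_transfer:
  fixes M :: "'a \<Rightarrow> 'a \<Rightarrow> real"
  assumes g: "bij_betw g {0..<n} S"
  shows "is_eigenvalue_on S M \<mu> \<longleftrightarrow> eigenvalue (mat n n (\<lambda>(i,j). M (g i) (g j))) \<mu>"
proof -
  let ?A = "mat n n (\<lambda>(i,j). M (g i) (g j))"
  have sr: "(\<Sum>y\<in>S. h y) = (\<Sum>j<n. h (g j))" for h :: "'a \<Rightarrow> real"
    using sum.reindex_bij_betw[OF g, of h] by (simp add: atLeast0LessThan)
  show ?thesis
  proof
    assume "is_eigenvalue_on S M \<mu>"
    then obtain v where v0: "\<exists>x\<in>S. v x \<noteq> 0" and ev: "\<forall>x\<in>S. (\<Sum>y\<in>S. M x y * v y) = \<mu> * v x"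
      unfolding is_eigenvalue_on_def by blast
    define w where "w = vec n (\<lambda>i. v (g i))"
    from v0 obtain x where x: "x \<in> S" "v x \<noteq> 0" by blast
    then obtain i where i: "i < n" "g i = x" using g unfolding bij_betw_def by auto
    have "w \<noteq> 0\<^sub>v n" using i x unfolding w_def by (metis index_vec index_zero_vec(1))
    moreover have "?A *\<^sub>v w = \<mu> \<cdot>\<^sub>v w"
    proof (rule eq_vecI)
      fix i assume i: "i < dim_vec (\<mu> \<cdot>\<^sub>v w)"
      hence i': "i < n" unfolding w_def by simp
      have gi: "g i \<in> S" using g i' unfolding bij_betw_def by auto
      have "(?A *\<^sub>v w) $ i = (\<Sum>j<n. M (g i) (g j) * v (g j))"
        using i' unfolding w_def by (simp add: scalar_prod_def atLeast0LessThan)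
      also have "\<dots> = \<mu> * v (g i)" using ev gi sr[of "\<lambda>y. M (g i) y * v y"] by simp
      finally show "(?A *\<^sub>v w) $ i = (\<mu> \<cdot>\<^sub>v w) $ i" using i' unfolding w_def by simp
    qed (simp add: w_def)
    moreover have "w \<in> carrier_vec n" unfolding w_def by simp
    ultimately show "eigenvalue ?A \<mu>" unfolding eigenvalue_def eigenvector_def by auto
  next
    assume "eigenvalue ?A \<mu>"
    then obtain w where w: "w \<in> carrier_vec n" "w \<noteq> 0\<^sub>v n" "?A *\<^sub>v w = \<mu> \<cdot>\<^sub>v w"
      unfolding eigenvalue_def eigenvector_def by auto
    define v where "v = (\<lambda>x. w $ (the_inv_into {0..<n} g x))"
    have vg: "v (g j) = w $ j" if "j < n" for j
      using that g unfolding v_def bij_betw_def by (simp add: the_inv_into_f_f)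
    obtain i where i: "i < n" "w $ i \<noteq> 0" using w(1,2) by (metis carrier_vecD eq_vecI index_zero_vec)
    have "\<exists>x\<in>S. v x \<noteq> 0" using i vg g unfolding bij_betw_def by force
    moreover have "\<forall>x\<in>S. (\<Sum>y\<in>S. M x y * v y) = \<mu> * v x"
    proof
      fix x assume "x \<in> S"
      then obtain i where i: "i < n" "g i = x" using g unfolding bij_betw_def by auto
      have "(\<Sum>y\<in>S. M x y * v y) = (\<Sum>j<n. M (g i) (g j) * w $ j)"
        using sr[of "\<lambda>y. M x y * v y"] i vg by simp
      also have "\<dots> = (?A *\<^sub>v w) $ i" using i w(1) by (simp add: scalar_prod_def atLeast0LessThan)
      also have "\<dots> = \<mu> * w $ i" using w(3) i w(1) by simp
      also have "\<dots> = \<mu> * v x" using vg[OF i(1)] i(2) by simp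
      finally show "(\<Sum>y\<in>S. M x y * v y) = \<mu> * v x" .
    qed
    ultimately show "is_eigenvalue_on S M \<mu>" unfolding is_eigenvalue_on_def by blast
  qed
qed

lemma herm_real:
  fixes A :: "real mat" and v :: "complex vec"
  assumes A: "A \<in> carrier_mat n n" and sym: "\<And>i j. i < n \<Longrightarrow> j < n \<Longrightarrow> A $$ (i,j) = A $$ (j,i)"
    and ev: "eigenvector (map_mat complex_of_real A) v l"
  shows "Im l = 0"
proof -
  let ?C = "map_mat complex_of_real A"
  from ev A have v: "v \<in> carrier_vec n" "v \<noteq> 0\<^sub>v n" "?C *\<^sub>v v = l \<cdot>\<^sub>v v"
    unfolding eigenvector_def by auto
  have row: "(\<Sum>j<n. of_real (A $$ (i,j)) * v $ j) = l * v $ i" if "i < n" for i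
  proof -
    have "(?C *\<^sub>v v) $ i = (\<Sum>j<n. of_real (A $$ (i,j)) * v $ j)"
      using that A v(1) by (simp add: scalar_prod_def atLeast0LessThan)
    thus ?thesis using v(3) that v(1) by simp
  qed
  define s where "s = (\<Sum>i<n. \<Sum>j<n. cnj (v $ i) * of_real (A $$ (i,j)) * v $ j)"
  define N where "N = (\<Sum>i<n. (cmod (v $ i))^2)"
  have s1: "s = l * of_real N"
  proof -
    have "s = (\<Sum>i<n. cnj (v $ i) * (\<Sum>j<n. of_real (A $$ (i,j)) * v $ j))"
      unfolding s_def by (simp add: sum_distrib_left mult.assoc)
    also have "\<dots> = (\<Sum>i<n. l * (cnj (v $ i) * v $ i))" using row by (simp add: ac_simps)
    also have "\<dots> = l * of_real N" unfolding N_def of_real_sum sum_distrib_left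
      by (intro sum.cong refl) (metis complex_norm_square mult.commute)
    finally show ?thesis .
  qed
  have "cnj s = (\<Sum>i<n. \<Sum>j<n. v $ i * of_real (A $$ (i,j)) * cnj (v $ j))"
    unfolding s_def by (simp add: cnj_sum)
  also have "\<dots> = (\<Sum>j<n. \<Sum>i<n. v $ i * of_real (A $$ (i,j)) * cnj (v $ j))"
    by (rule sum.swap)
  also have "\<dots> = s" unfolding s_def
    by (intro sum.cong refl) (simp add: sym ac_simps)
  finally have "Im s = 0" by (metis cnj.sel(2) equation_minus_iff neg_equal_zero)
  obtain i where i: "i < n" "v $ i \<noteq> 0" using v(1,2) by (metis carrier_vecD eq_vecI index_zero_vec)
  have "N > 0" unfolding N_def
    by (rule sum_pos2[of _ i]) (use i in auto)
  with \<open>Im s = 0\<close> s1 show ?thesis by simp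
qed

lemma eig_fin_ne:
  fixes M :: "'a \<Rightarrow> 'a \<Rightarrow> real"
  assumes fin: "finite S" and ne: "S \<noteq> {}" and sym: "\<forall>x\<in>S. \<forall>y\<in>S. M x y = M y x"
  shows "finite {\<mu>. is_eigenvalue_on S M \<mu>} \<and> {\<mu>. is_eigenvalue_on S M \<mu>} \<noteq> {}"
proof -
  define n where "n = card S"
  obtain g where g: "bij_betw g {0..<n} S" using ex_bij_betw_nat_finite[OF fin] n_def by auto
  define A where "A = mat n n (\<lambda>(i,j). M (g i) (g j))"
  have A: "A \<in> carrier_mat n n" unfolding A_def by simp
  have eq: "{\<mu>. is_eigenvalue_on S M \<mu>} = spectrum A"
    unfolding spectrum_def A_def using eig_transfer[OF g] by auto
  have n: "n > 0" using fin ne n_def by (simp add: card_gt_0_iff)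
  have gS: "g i \<in> S" if "i < n" for i using g that unfolding bij_betw_def by auto
  have Asym: "A $$ (i,j) = A $$ (j,i)" if "i < n" "j < n" for i j
    using that sym gS unfolding A_def by simp
  let ?C = "map_mat complex_of_real A"
  have C: "?C \<in> carrier_mat n n" using A by simp
  obtain l where l: "eigenvalue ?C l" using spectrum_non_empty[OF C n] unfolding spectrum_def by auto
  then obtain v where v: "eigenvector ?C v l" unfolding eigenvalue_def by auto
  have "Im l = 0" using herm_real[OF A Asym v] by auto
  have "poly (char_poly ?C) l = 0" using l eigenvalue_root_char_poly[OF C] by simp
  note root = this
  have cp: "char_poly ?C = map_poly of_real (char_poly A)" by (rule of_real_hom.char_poly_hom[OF A])
  have lre: "complex_of_real (Re l) = l" using \<open>Im l = 0\<close> by (simp add: complex_eq_iff)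
  have "complex_of_real (poly (char_poly A) (Re l)) = poly (map_poly of_real (char_poly A)) (of_real (Re l))"
    by (rule of_real_hom.poly_map_poly[symmetric])
  also have "\<dots> = poly (char_poly ?C) l" unfolding cp lre ..
  also have "\<dots> = 0" by (rule root)
  finally have "complex_of_real (poly (char_poly A) (Re l)) = 0" .
  hence "poly (char_poly A) (Re l) = 0" by simp
  hence "Re l \<in> spectrum A" using spectrum_root_char_poly[OF A] by simp
  thus ?thesis using eq card_finite_spectrum[OF A] by auto
qed



definition restr :: "'a hgraph \<Rightarrow> 'a set \<Rightarrow> 'a hgraph" where
  "restr G V = \<lparr>hverts = V, hfat = hfat G \<inter> V, hadj = (\<lambda>x y. x \<in> V \<and> y \<in> V \<and> hadj G x y)\<rparr>"

lemma restr_simps[simp]: "hverts (restr G V) = V" "hfat (restr G V) = hfat G \<inter> V"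
  "hadj (restr G V) x y \<longleftrightarrow> x \<in> V \<and> y \<in> V \<and> hadj G x y"
  by (auto simp: restr_def)

lemma slim_restr: "slim (restr G V) = V - hfat G" by (auto simp: slim_def)

lemma restr_induced:
  assumes G: "hoffman_graph G" and V: "V \<subseteq> hverts G"
    and fs: "\<forall>f\<in>hfat G \<inter> V. \<exists>x\<in>V - hfat G. hadj G f x"
  shows "induced_hsub (restr G V) G"
proof -
  have fin: "finite V" using G V finite_subset unfolding hoffman_graph_def by blast
  have "hoffman_graph (restr G V)"
    using G fin fs unfolding hoffman_graph_def slim_def by auto
  thus ?thesis using V unfolding induced_hsub_def by auto
qed

definition qf :: "'a hgraph \<Rightarrow> ('a \<Rightarrow> real) \<Rightarrow> real" where
  "qf K v = (\<Sum>x\<in>slim K. \<Sum>y\<in>slim K. Bmat K x y * v x * v y)"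
definition nq :: "'a hgraph \<Rightarrow> ('a \<Rightarrow> real) \<Rightarrow> real" where
  "nq K v = (\<Sum>x\<in>slim K. (v x)^2)"

lemma hoffman_finite_slim: "hoffman_graph K \<Longrightarrow> finite (slim K)"
  unfolding hoffman_graph_def slim_def by auto

lemma lambda_min_ge:
  assumes K: "hoffman_graph K" and ne: "slim K \<noteq> {}" and b: "\<forall>v. qf K v \<ge> \<alpha> * nq K v"
  shows "lambda_min K \<ge> \<alpha>"
proof -
  have fin: "finite (slim K)" using hoffman_finite_slim[OF K] .
  have sym: "\<forall>x\<in>slim K. \<forall>y\<in>slim K. Bmat K x y = Bmat K y x"
    using K unfolding Bmat_def hoffman_graph_def by (auto simp: Int_commute)
  note E = eig_fin_ne[OF fin ne sym]
  have "\<alpha> \<le> \<mu>" if "is_eigenvalue_on (slim K) (Bmat K) \<mu>" for \<mu>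
  proof -
    from that obtain v where v0: "\<exists>x\<in>slim K. v x \<noteq> 0"
      and ev: "\<forall>x\<in>slim K. (\<Sum>y\<in>slim K. Bmat K x y * v y) = \<mu> * v x"
      unfolding is_eigenvalue_on_def by blast
    have "qf K v = (\<Sum>x\<in>slim K. v x * (\<Sum>y\<in>slim K. Bmat K x y * v y))"
      unfolding qf_def by (simp add: sum_distrib_left ac_simps)
    also have "\<dots> = (\<Sum>x\<in>slim K. v x * (\<mu> * v x))" using ev by simp
    also have "\<dots> = \<mu> * nq K v" unfolding nq_def
      by (simp add: sum_distrib_left power2_eq_square ac_simps)
    finally have "\<alpha> * nq K v \<le> \<mu> * nq K v" using b by metis
    moreover have "nq K v > 0" unfolding nq_def
      using v0 fin by (metis sum_pos2 power2_less_eq_zero_iff zero_le_power2 not_le)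
    ultimately show ?thesis by simp
  qed
  thus ?thesis unfolding lambda_min_def using E by (simp add: Min_ge_iff)
qed


lemma fat_nbrs_sub:
  assumes "induced_hsub K G" "x \<in> slim K" "\<forall>y\<in>hfat G. hadj G x y \<longrightarrow> y \<in> hverts K"
  shows "fat_nbrs K x = fat_nbrs G x"
  using assms unfolding fat_nbrs_def induced_hsub_def slim_def by auto

lemma Bmat_sub:
  assumes "induced_hsub K G" "x \<in> slim K" "y \<in> slim K"
    "\<forall>x\<in>slim K. \<forall>y\<in>hfat G. hadj G x y \<longrightarrow> y \<in> hverts K"
  shows "Bmat K x y = Bmat G x y"
proof -
  have "hadj K x y = hadj G x y" using assms(1,2,3) unfolding induced_hsub_def slim_def by blast
  moreover have "fat_nbrs K x = fat_nbrs G x" using fat_nbrs_sub[OF assms(1,2)] assms(2,4) by blast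
  moreover have "fat_nbrs K y = fat_nbrs G y" using fat_nbrs_sub[OF assms(1,3)] assms(3,4) by blast
  ultimately show ?thesis unfolding Bmat_def by simp
qed

lemma slim_sub: "induced_hsub K G \<Longrightarrow> slim K \<subseteq> slim G"
  unfolding induced_hsub_def slim_def by auto

lemma qf_sub:
  assumes KG: "induced_hsub K G" and G: "hoffman_graph G"
    and iii: "\<forall>x\<in>slim K. \<forall>y\<in>hfat G. hadj G x y \<longrightarrow> y \<in> hverts K"
    and b: "\<forall>v. qf G v \<ge> \<alpha> * nq G v"
  shows "\<forall>v. qf K v \<ge> \<alpha> * nq K v"
proof
  fix v
  define w :: "'a \<Rightarrow> real" where "w x = (if x \<in> slim K then v x else 0)" for x
  have sub: "slim K \<subseteq> slim G" using slim_sub[OF KG] .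
  have fin: "finite (slim G)" using hoffman_finite_slim[OF G] .
  have "qf G w = (\<Sum>x\<in>slim K. \<Sum>y\<in>slim G. Bmat G x y * w x * w y)"
    unfolding qf_def by (rule sum.mono_neutral_right[OF fin sub]) (auto simp: w_def)
  also have "\<dots> = (\<Sum>x\<in>slim K. \<Sum>y\<in>slim K. Bmat G x y * w x * w y)"
    by (rule sum.cong[OF refl], rule sum.mono_neutral_right[OF fin sub], auto simp: w_def)
  also have "\<dots> = qf K v" unfolding qf_def
    by (intro sum.cong refl) (auto simp: w_def Bmat_sub[OF KG _ _ iii])
  finally have 1: "qf G w = qf K v" .
  have "nq G w = nq K v" unfolding nq_def
    by (rule sum.mono_neutral_cong_right[OF fin sub]) (auto simp: w_def)
  thus "qf K v \<ge> \<alpha> * nq K v" using b 1 by metis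
qed

lemma decompD:
  assumes "decomposition G I Hs"
  shows "\<forall>i \<in> I. induced_hsub (Hs i) G"
    "hverts G = (\<Union>i \<in> I. hverts (Hs i))"
    "\<forall>i \<in> I. \<forall>j \<in> I. i \<noteq> j \<longrightarrow> slim (Hs i) \<inter> slim (Hs j) = {}"
    "\<forall>i \<in> I. \<forall>x \<in> slim (Hs i). \<forall>y \<in> hfat G. hadj G x y \<longrightarrow> y \<in> hverts (Hs i)"
    "\<forall>i \<in> I. \<forall>j \<in> I. i \<noteq> j \<longrightarrow> (\<forall>x \<in> slim (Hs i). \<forall>y \<in> slim (Hs j).
         card (fat_nbrs G x \<inter> fat_nbrs G y) \<le> 1 \<and>
         (card (fat_nbrs G x \<inter> fat_nbrs G y) = 1 \<longleftrightarrow> hadj G x y))"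
proof -
  note d = assms[unfolded decomposition_def]
  show "\<forall>i \<in> I. induced_hsub (Hs i) G" using d by (rule conjunct1)
  show "hverts G = (\<Union>i \<in> I. hverts (Hs i))" using d[THEN conjunct2] by (rule conjunct1)
  show "\<forall>i \<in> I. \<forall>j \<in> I. i \<noteq> j \<longrightarrow> slim (Hs i) \<inter> slim (Hs j) = {}"
    using d[THEN conjunct2, THEN conjunct2] by (rule conjunct1)
  show "\<forall>i \<in> I. \<forall>x \<in> slim (Hs i). \<forall>y \<in> hfat G. hadj G x y \<longrightarrow> y \<in> hverts (Hs i)"
    using d[THEN conjunct2, THEN conjunct2, THEN conjunct2] by (rule conjunct1)
  show "\<forall>i \<in> I. \<forall>j \<in> I. i \<noteq> j \<longrightarrow> (\<forall>x \<in> slim (Hs i). \<forall>y \<in> slim (Hs j).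
         card (fat_nbrs G x \<inter> fat_nbrs G y) \<le> 1 \<and>
         (card (fat_nbrs G x \<inter> fat_nbrs G y) = 1 \<longleftrightarrow> hadj G x y))"
    using d[THEN conjunct2, THEN conjunct2, THEN conjunct2] by (rule conjunct2)
qed

lemma decomp_Bmat_zero:
  assumes D: "decomposition G I Hs" and ij: "i \<in> I" "j \<in> I" "i \<noteq> j"
    and x: "x \<in> slim (Hs i)" and y: "y \<in> slim (Hs j)"
  shows "Bmat G x y = 0"
proof -
  have "card (fat_nbrs G x \<inter> fat_nbrs G y) \<le> 1"
    "card (fat_nbrs G x \<inter> fat_nbrs G y) = 1 \<longleftrightarrow> hadj G x y"
    using decompD(5)[OF D] ij x y by blast+
  thus ?thesis unfolding Bmat_def by auto
qed

lemma decomp_qf: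
  assumes D: "decomposition G I Hs" and G: "hoffman_graph G" and I: "finite I"
    and b: "\<forall>i\<in>I. \<forall>v. qf (Hs i) v \<ge> \<alpha> * nq (Hs i) v"
  shows "qf G v \<ge> \<alpha> * nq G v"
proof -
  have ind: "\<And>i. i\<in>I \<Longrightarrow> induced_hsub (Hs i) G" using decompD(1)[OF D] by blast
  have iii: "\<And>i. i\<in>I \<Longrightarrow> \<forall>x\<in>slim (Hs i). \<forall>y\<in>hfat G. hadj G x y \<longrightarrow> y \<in> hverts (Hs i)"
    using decompD(4)[OF D] by blast
  have disj: "\<And>i j. i\<in>I \<Longrightarrow> j\<in>I \<Longrightarrow> i \<noteq> j \<Longrightarrow> slim (Hs i) \<inter> slim (Hs j) = {}"
    using decompD(3)[OF D] by blast
  have finS: "finite (slim (Hs i))" if "i \<in> I" for i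
    using ind[OF that] unfolding induced_hsub_def by (auto intro: hoffman_finite_slim)
  have SU: "slim G = (\<Union>i\<in>I. slim (Hs i))"
  proof
    show "(\<Union>i\<in>I. slim (Hs i)) \<subseteq> slim G" using ind slim_sub by blast
    show "slim G \<subseteq> (\<Union>i\<in>I. slim (Hs i))"
    proof
      fix x assume x: "x \<in> slim G"
      then obtain i where i: "i \<in> I" "x \<in> hverts (Hs i)" using decompD(2)[OF D] x unfolding slim_def by auto
      have "x \<in> slim (Hs i)" using ind[OF i(1)] x i(2) unfolding induced_hsub_def slim_def by auto
      thus "x \<in> (\<Union>i\<in>I. slim (Hs i))" using i(1) by blast
    qed
  qed
  have UD: "sum h (slim G) = (\<Sum>i\<in>I. sum h (slim (Hs i)))" for h :: "'a \<Rightarrow> real"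
    unfolding SU by (rule sum.UNION_disjoint[OF I]) (use finS disj in auto)
  have inner: "(\<Sum>y\<in>slim G. Bmat G x y * v x * v y) = (\<Sum>y\<in>slim (Hs i). Bmat (Hs i) x y * v x * v y)"
    if i: "i \<in> I" and x: "x \<in> slim (Hs i)" for i x
  proof -
    have "(\<Sum>y\<in>slim G. Bmat G x y * v x * v y) = (\<Sum>j\<in>I. \<Sum>y\<in>slim (Hs j). Bmat G x y * v x * v y)"
      by (rule UD)
    also have "\<dots> = (\<Sum>j\<in>{i}. \<Sum>y\<in>slim (Hs j). Bmat G x y * v x * v y)"
    proof (rule sum.mono_neutral_right[OF I])
      show "{i} \<subseteq> I" using i by simp
      show "\<forall>j\<in>I - {i}. (\<Sum>y\<in>slim (Hs j). Bmat G x y * v x * v y) = 0"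
        using decomp_Bmat_zero[OF D i _ _ x] by (auto intro!: sum.neutral)
    qed
    also have "\<dots> = (\<Sum>y\<in>slim (Hs i). Bmat G x y * v x * v y)" by simp
    also have "\<dots> = (\<Sum>y\<in>slim (Hs i). Bmat (Hs i) x y * v x * v y)"
    proof (rule sum.cong[OF refl])
      fix y assume "y \<in> slim (Hs i)"
      thus "Bmat G x y * v x * v y = Bmat (Hs i) x y * v x * v y"
        using Bmat_sub[OF ind[OF i] x _ iii[OF i]] by simp
    qed
    finally show ?thesis .
  qed
  have "qf G v = (\<Sum>i\<in>I. \<Sum>x\<in>slim (Hs i). \<Sum>y\<in>slim G. Bmat G x y * v x * v y)"
    unfolding qf_def by (rule UD)
  also have "\<dots> = (\<Sum>i\<in>I. qf (Hs i) v)" unfolding qf_def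
    by (rule sum.cong[OF refl], rule sum.cong[OF refl], rule inner)
  finally have e1: "qf G v = (\<Sum>i\<in>I. qf (Hs i) v)" .
  have "(\<Sum>i\<in>I. \<alpha> * nq (Hs i) v) \<le> (\<Sum>i\<in>I. qf (Hs i) v)" by (intro sum_mono) (use b in auto)
  moreover have "(\<Sum>i\<in>I. \<alpha> * nq (Hs i) v) = \<alpha> * nq G v"
    unfolding nq_def sum_distrib_left[symmetric] using UD[of "\<lambda>x. (v x)^2"] by simp
  ultimately show ?thesis using e1 by simp
qed


lemma slim_hsub: "induced_hsub K G \<Longrightarrow> slim K = hverts K - hfat G"
  unfolding induced_hsub_def slim_def by auto

lemma merge_props:
  assumes D: "decomposition G I Hs" and G: "hoffman_graph G" and J: "J \<subseteq> I"
  shows "induced_hsub (restr G (\<Union>i\<in>J. hverts (Hs i))) G"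
    "slim (restr G (\<Union>i\<in>J. hverts (Hs i))) = (\<Union>i\<in>J. slim (Hs i))"
proof -
  let ?V = "\<Union>i\<in>J. hverts (Hs i)"
  have ind: "\<And>i. i\<in>I \<Longrightarrow> induced_hsub (Hs i) G" using decompD(1)[OF D] by blast
  have V: "?V \<subseteq> hverts G" using ind J unfolding induced_hsub_def by blast
  show "slim (restr G ?V) = (\<Union>i\<in>J. slim (Hs i))"
    unfolding slim_restr using slim_hsub[OF ind] J by auto
  show "induced_hsub (restr G ?V) G"
  proof (rule restr_induced[OF G V], rule ballI)
    fix f assume f: "f \<in> hfat G \<inter> ?V"
    then obtain i where i: "i \<in> J" "f \<in> hverts (Hs i)" by blast
    have iI: "i \<in> I" using i J by blast
    have ff: "f \<in> hfat (Hs i)" using ind[OF iI] f i unfolding induced_hsub_def by blast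
    have hi: "hoffman_graph (Hs i)" using ind[OF iI] unfolding induced_hsub_def by blast
    then obtain x where x: "x \<in> slim (Hs i)" "hadj (Hs i) f x" using ff unfolding hoffman_graph_def by blast
    have "hadj G f x" "x \<in> hverts (Hs i) - hfat G" using x ind[OF iI] slim_hsub[OF ind[OF iI]]
      unfolding induced_hsub_def by auto
    thus "\<exists>x\<in>?V - hfat G. hadj G f x" using i by blast
  qed
qed

lemma decomp_merge:
  assumes D: "decomposition G I Hs" and G: "hoffman_graph G"
    and U: "I1 \<union> I2 = I" and Dj: "I1 \<inter> I2 = {}"
  shows "decomposition G {1::nat,2}
     (\<lambda>k. if k = 1 then restr G (\<Union>i\<in>I1. hverts (Hs i)) else restr G (\<Union>i\<in>I2. hverts (Hs i)))"
proof -
  define M where "M J = restr G (\<Union>i\<in>J. hverts (Hs i))" for J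
  have J1: "I1 \<subseteq> I" and J2: "I2 \<subseteq> I" using U by auto
  note m1 = merge_props[OF D G J1, folded M_def] and m2 = merge_props[OF D G J2, folded M_def]
  note d3 = decompD(3)[OF D] and d4 = decompD(4)[OF D] and d5 = decompD(5)[OF D]
  have ii: "\<forall>x\<in>slim (M J). \<forall>y\<in>hfat G. hadj G x y \<longrightarrow> y \<in> hverts (M J)"
    if J: "J \<subseteq> I" and sl: "slim (M J) = (\<Union>i\<in>J. slim (Hs i))" for J
  proof (intro ballI impI)
    fix x y assume "x \<in> slim (M J)" "y \<in> hfat G" "hadj G x y"
    then obtain i where "i \<in> J" "x \<in> slim (Hs i)" using sl by auto
    thus "y \<in> hverts (M J)" using d4 J \<open>y \<in> hfat G\<close> \<open>hadj G x y\<close> unfolding M_def by auto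
  qed
  have disj: "slim (M I1) \<inter> slim (M I2) = {}"
  proof -
    have "slim (Hs i) \<inter> slim (Hs j) = {}" if "i \<in> I1" "j \<in> I2" for i j
    proof (rule d3[rule_format])
      show "i \<in> I" "j \<in> I" using that J1 J2 by auto
      show "i \<noteq> j" using that Dj by auto
    qed
    thus ?thesis unfolding m1(2) m2(2) by blast
  qed
  have cross: "card (fat_nbrs G x \<inter> fat_nbrs G y) \<le> 1 \<and>
         (card (fat_nbrs G x \<inter> fat_nbrs G y) = 1 \<longleftrightarrow> hadj G x y)"
    if xy: "(x \<in> slim (M I1) \<and> y \<in> slim (M I2)) \<or> (x \<in> slim (M I2) \<and> y \<in> slim (M I1))" for x y
  proof -
    obtain i j where ij: "i \<in> I" "j \<in> I" "i \<noteq> j" "x \<in> slim (Hs i)" "y \<in> slim (Hs j)"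
      using xy J1 J2 Dj unfolding m1(2) m2(2) by blast
    show ?thesis using d5[rule_format, OF ij] .
  qed
  show ?thesis unfolding M_def[symmetric] decomposition_def
  proof (intro conjI)
    show "\<forall>i\<in>{1::nat,2}. induced_hsub (if i = 1 then M I1 else M I2) G" using m1(1) m2(1) by simp
    show "hverts G = (\<Union>i\<in>{1::nat,2}. hverts (if i = 1 then M I1 else M I2))"
      using decompD(2)[OF D] U unfolding M_def by auto
    show "\<forall>i\<in>{1::nat,2}. \<forall>j\<in>{1,2}. i \<noteq> j \<longrightarrow>
       slim (if i = 1 then M I1 else M I2) \<inter> slim (if j = 1 then M I1 else M I2) = {}"
      using disj by auto
    show "\<forall>i\<in>{1::nat,2}. \<forall>x\<in>slim (if i = 1 then M I1 else M I2). \<forall>y\<in>hfat G.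
       hadj G x y \<longrightarrow> y \<in> hverts (if i = 1 then M I1 else M I2)"
      using ii[OF J1 m1(2)] ii[OF J2 m2(2)] by simp
    show "\<forall>i\<in>{1::nat,2}. \<forall>j\<in>{1,2}. i \<noteq> j \<longrightarrow>
       (\<forall>x\<in>slim (if i = 1 then M I1 else M I2). \<forall>y\<in>slim (if j = 1 then M I1 else M I2).
         card (fat_nbrs G x \<inter> fat_nbrs G y) \<le> 1 \<and>
         (card (fat_nbrs G x \<inter> fat_nbrs G y) = 1) = hadj G x y)"
      using cross by auto
  qed
qed


lemma tau_sq: "golden_tau * golden_tau = golden_tau + 1"
proof -
  have "sqrt 5 * sqrt 5 = (5::real)" by simp
  thus ?thesis unfolding golden_tau_def by (simp add: field_simps)
qed
lemma tau_pos: "golden_tau \<ge> 1"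
  unfolding golden_tau_def by simp
lemma quad:
  fixes a b s :: real assumes s: "s * s = 1"
  shows "-2*a^2 + 2*s*a*b - b^2 \<ge> (-1 - golden_tau)*(a^2+b^2)"
proof -
  define t where "t = golden_tau"
  have t2: "t * t = t + 1" and t1: "t \<ge> 1" unfolding t_def using tau_sq tau_pos by auto
  define D where "D = (t - 1)*a^2 + 2*s*a*b + t*b^2"
  have "t * D = t*t*a^2 - t*a^2 + 2*s*t*a*b + t*t*b^2" unfolding D_def by (simp add: algebra_simps)
  also have "\<dots> = a^2 + 2*s*t*a*b + (t+1)*b^2" unfolding t2 by (simp add: algebra_simps)
  also have "\<dots> = a^2 + 2*s*t*a*b + (s*s)*(t*t)*b^2" unfolding s t2 by simp
  also have "\<dots> = (a + s*t*b)^2" by (simp add: power2_eq_square algebra_simps)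
  finally have "t * D \<ge> 0" by simp
  hence "D \<ge> 0" using t1 by (simp add: zero_le_mult_iff)
  thus ?thesis unfolding D_def t_def by (simp add: algebra_simps)
qed


locale QH =
  fixes H :: "'a hgraph" and p q r :: nat and g :: "nat \<Rightarrow> 'a" and F :: 'a
  assumes hg: "hoffman_graph H"
    and one_fat: "\<forall>x\<in>slim H. card (fat_nbrs H x) = 1"
    and pqr: "p + q \<le> r" and rpos: "0 < r"
    and gb: "bij_betw g {0..<r+p+q} (slim H)"
    and gpos: "\<And>a b. a < r+p+q \<Longrightarrow> b < r+p+q \<Longrightarrow>
        spos (special_graph H) (g a) (g b) = spos (Qgraph p q r) a b"
    and gneg: "\<And>a b. a < r+p+q \<Longrightarrow> b < r+p+q \<Longrightarrow>
        sneg (special_graph H) (g a) (g b) = sneg (Qgraph p q r) a b"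
    and Fnew: "F \<notin> hverts H"
begin

lemma g_in: "a < r+p+q \<Longrightarrow> g a \<in> slim H"
  using gb by (auto dest: bij_betw_apply)
lemma g_eq: "a < r+p+q \<Longrightarrow> b < r+p+q \<Longrightarrow> g a = g b \<longleftrightarrow> a = b"
  using bij_betw_imp_inj_on[OF gb] by (auto simp: inj_on_eq_iff)
lemma slim_ex: "x \<in> slim H \<Longrightarrow> \<exists>a<r+p+q. x = g a"
  using bij_betw_imp_surj_on[OF gb] by force

lemma H_sym: "hadj H x y \<Longrightarrow> hadj H y x" using hg unfolding hoffman_graph_def by blast
lemma H_irr: "\<not> hadj H x x" using hg unfolding hoffman_graph_def by blast
lemma H_in: "hadj H x y \<Longrightarrow> x \<in> hverts H \<and> y \<in> hverts H" using hg unfolding hoffman_graph_def by blast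
lemma H_ff: "x \<in> hfat H \<Longrightarrow> y \<in> hfat H \<Longrightarrow> \<not> hadj H x y" using hg unfolding hoffman_graph_def by blast
lemma H_fin: "finite (hverts H)" using hg unfolding hoffman_graph_def by blast
lemma H_fatsub: "hfat H \<subseteq> hverts H" using hg unfolding hoffman_graph_def by blast
lemma H_fatslim: "f \<in> hfat H \<Longrightarrow> \<exists>x\<in>slim H. hadj H f x" using hg unfolding hoffman_graph_def by blast
lemma slimD: "x \<in> slim H \<Longrightarrow> x \<in> hverts H \<and> x \<notin> hfat H" unfolding slim_def by blast

definition phi where "phi x = the_elem (fat_nbrs H x)"

lemma fn_phi: "x \<in> slim H \<Longrightarrow> fat_nbrs H x = {phi x}"
proof -
  assume x: "x \<in> slim H"
  then obtain y where "fat_nbrs H x = {y}" using one_fat card_1_singletonE by metis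
  thus ?thesis unfolding phi_def by simp
qed

lemma phi_fat: "x \<in> slim H \<Longrightarrow> phi x \<in> hfat H"
  using fn_phi unfolding fat_nbrs_def by blast
lemma phi_adj: "x \<in> slim H \<Longrightarrow> hadj H x (phi x)"
  using fn_phi unfolding fat_nbrs_def by blast
lemma phi_uniq: "x \<in> slim H \<Longrightarrow> y \<in> hfat H \<Longrightarrow> hadj H x y \<Longrightarrow> y = phi x"
  using fn_phi unfolding fat_nbrs_def by blast
lemma phi_nadj: "x \<in> slim H \<Longrightarrow> y \<in> hfat H \<Longrightarrow> y \<noteq> phi x \<Longrightarrow> \<not> hadj H x y \<and> \<not> hadj H y x"
  using phi_uniq H_sym by blast

lemma F_nf: "F \<notin> hfat H" using Fnew H_fatsub by blast
lemma F_ns: "F \<notin> slim H" using Fnew slimD by blast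
lemma F_nadj: "\<not> hadj H F z" "\<not> hadj H z F" using Fnew H_in by blast+
lemma phi_ne_F: "x \<in> slim H \<Longrightarrow> phi x \<noteq> F" using phi_fat F_nf by blast
lemma phi_ne_slim: "x \<in> slim H \<Longrightarrow> y \<in> slim H \<Longrightarrow> phi x \<noteq> y" using phi_fat slimD by blast

abbreviation n where "n \<equiv> r+p+q"

lemma spos_iff: "a < n \<Longrightarrow> b < n \<Longrightarrow>
   spos (Qgraph p q r) a b \<longleftrightarrow> a \<noteq> b \<and> hadj H (g a) (g b) \<and> phi (g a) \<noteq> phi (g b)"
  using gpos[of a b, symmetric] g_in[of a] g_in[of b] g_eq[of a b] fn_phi[of "g a"] fn_phi[of "g b"]
  unfolding special_graph_def by auto

lemma sneg_iff: "a < n \<Longrightarrow> b < n \<Longrightarrow>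
   sneg (Qgraph p q r) a b \<longleftrightarrow> a \<noteq> b \<and> \<not> hadj H (g a) (g b) \<and> phi (g a) = phi (g b)"
  using gneg[of a b, symmetric] g_in[of a] g_in[of b] g_eq[of a b] fn_phi[of "g a"] fn_phi[of "g b"]
  unfolding special_graph_def by auto

lemma K1: "a < r \<Longrightarrow> b < r \<Longrightarrow> a \<noteq> b \<Longrightarrow> hadj H (g a) (g b) \<and> phi (g a) \<noteq> phi (g b)"
  using spos_iff[of a b] by (simp add: Qgraph_def)

lemma K2: "k < p \<Longrightarrow> hadj H (g k) (g (r+k)) \<and> phi (g k) \<noteq> phi (g (r+k))"
  using spos_iff[of k "r+k"] pqr rpos by (simp add: Qgraph_def)

lemma K3: "p \<le> k \<Longrightarrow> k < p+q \<Longrightarrow> \<not> hadj H (g k) (g (r+k)) \<and> phi (g k) = phi (g (r+k))"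
  using sneg_iff[of k "r+k"] pqr rpos by (simp add: Qgraph_def)

definition pc :: "nat \<Rightarrow> nat" where "pc a = (if a < r then a else a - r)"

lemma K4: "a < n \<Longrightarrow> b < n \<Longrightarrow> a \<noteq> b \<Longrightarrow> pc a \<noteq> pc b \<Longrightarrow> \<not> (a < r \<and> b < r) \<Longrightarrow>
    hadj H (g a) (g b) \<longleftrightarrow> phi (g a) = phi (g b)"
proof -
  assume ab: "a < n" "b < n" "a \<noteq> b" "pc a \<noteq> pc b" "\<not> (a < r \<and> b < r)"
  have "\<not> spos (Qgraph p q r) a b" "\<not> sneg (Qgraph p q r) a b"
    using ab pqr unfolding Qgraph_def pc_def by (auto split: if_splits)
  thus ?thesis using spos_iff[OF ab(1,2)] sneg_iff[OF ab(1,2)] ab(3) by blast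
qed

definition R where "R = g ` {0..<r}"

lemma gR: "a < n \<Longrightarrow> g a \<in> R \<longleftrightarrow> a < r"
  unfolding R_def using g_eq by auto

lemma R_slim: "R \<subseteq> slim H" unfolding R_def using g_in by auto

definition HH :: "'a hgraph" where
  "HH = \<lparr>hverts = insert F (hverts H), hfat = insert F (hfat H),
         hadj = (\<lambda>x y. hadj H x y \<or> (x = F \<and> y \<in> R) \<or> (y = F \<and> x \<in> R))\<rparr>"

lemma HH_simps[simp]: "hverts HH = insert F (hverts H)" "hfat HH = insert F (hfat H)"
  "hadj HH x y \<longleftrightarrow> hadj H x y \<or> (x = F \<and> y \<in> R) \<or> (y = F \<and> x \<in> R)"
  unfolding HH_def by simp_all

lemma slim_HH: "slim HH = slim H" unfolding slim_def using Fnew by auto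

lemma F_nR: "F \<notin> R" using R_slim F_ns by blast
lemma phi_nR: "x \<in> slim H \<Longrightarrow> phi x \<notin> R" using R_slim phi_fat slimD by blast

lemma fn_HH: "x \<in> slim H \<Longrightarrow> fat_nbrs HH x = (if x \<in> R then {phi x, F} else {phi x})"
proof -
  assume x: "x \<in> slim H"
  have "x \<noteq> F" using x F_ns by blast
  hence "fat_nbrs HH x = fat_nbrs H x \<union> (if x \<in> R then {F} else {})"
    unfolding fat_nbrs_def using F_nadj by auto
  thus ?thesis using fn_phi[OF x] by auto
qed

lemma HH_adj_slim: "x \<in> slim H \<Longrightarrow> y \<in> slim H \<Longrightarrow> hadj HH x y \<longleftrightarrow> hadj H x y"
  using F_ns by auto

lemma hoffman_HH: "hoffman_graph HH"
proof -
  have "g 0 \<in> R" using rpos unfolding R_def by auto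
  moreover have "\<forall>f \<in> hfat H. \<exists>x \<in> slim H. hadj H f x" using H_fatslim by blast
  ultimately show ?thesis unfolding hoffman_graph_def slim_HH
    using H_fin H_fatsub H_in H_sym H_irr H_ff F_nR R_slim slimD phi_fat F_nadj
    by (auto simp: F_nf)
qed

lemma induced_HH: "induced_hsub H HH"
  unfolding induced_hsub_def using hg Fnew H_in F_nadj H_fatsub by auto


definition PV where "PV k = {g k, phi (g k), F} \<union> (if k < p+q then {g (r+k), phi (g (r+k))} else {})"
definition P where "P k = restr HH (PV k)"

lemma gk: "k < r \<Longrightarrow> g k \<in> slim H \<and> g k \<in> R" using g_in gR by auto
lemma grk: "k < p+q \<Longrightarrow> g (r+k) \<in> slim H \<and> g (r+k) \<notin> R" using g_in gR by auto
lemma ppq: "k < p+q \<Longrightarrow> k < r" using pqr by auto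

lemma slim_P: "k < r \<Longrightarrow> slim (P k) = (if k < p+q then {g k, g (r+k)} else {g k})"
  unfolding P_def slim_restr PV_def using gk[of k] grk[of k] slimD phi_fat F_ns by auto

lemma PV_sub: "k < r \<Longrightarrow> PV k \<subseteq> hverts HH"
  unfolding PV_def using gk[of k] grk[of k] slimD phi_fat H_fatsub by auto

lemma P_induced: "k < r \<Longrightarrow> induced_hsub (P k) HH"
  unfolding P_def
proof (rule restr_induced[OF hoffman_HH PV_sub], assumption, rule ballI)
  fix f assume k: "k < r" and f: "f \<in> hfat HH \<inter> PV k"
  have a1: "hadj HH (phi (g k)) (g k)" using phi_adj[of "g k"] gk[OF k] H_sym by auto
  have a2: "hadj HH F (g k)" using gk[OF k] by auto
  have a3: "hadj HH (phi (g (r+k))) (g (r+k))" if "k < p+q" using phi_adj[of "g (r+k)"] grk[OF that] H_sym by auto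
  have s1: "g k \<in> PV k - hfat HH" using gk[OF k] slimD F_ns unfolding PV_def by auto
  have s2: "g (r+k) \<in> PV k - hfat HH" if "k < p+q" using grk[OF that] slimD F_ns that unfolding PV_def by auto
  have "f = phi (g k) \<or> f = F \<or> (k < p+q \<and> f = phi (g (r+k)))"
    using f gk[OF k] grk[of k] slimD unfolding PV_def by (auto split: if_splits)
  thus "\<exists>x\<in>PV k - hfat HH. hadj HH f x" using a1 a2 a3 s1 s2 by blast
qed

lemma slimP_ex: "k < r \<Longrightarrow> x \<in> slim (P k) \<Longrightarrow> \<exists>a<n. x = g a \<and> pc a = k"
  using slim_P[of k] unfolding pc_def by (auto split: if_splits intro: exI[of _ k] exI[of _ "r+k"])

lemma cover: "a < n \<Longrightarrow> \<exists>k<r. g a \<in> slim (P k) \<and> phi (g a) \<in> PV k"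
proof -
  assume a: "a < n"
  show ?thesis
  proof (cases "a < r")
    case True thus ?thesis using slim_P[of a] unfolding PV_def by auto
  next
    case False
    then obtain k where k: "a = r + k" "k < p+q" using a by (metis add_less_cancel_left le_add_diff_inverse not_le add.assoc)
    thus ?thesis using slim_P[of k] ppq[of k] unfolding PV_def by auto
  qed
qed

lemma HH_cover: "hverts HH = (\<Union>i\<in>{1..r}. hverts (P (i - 1)))"
proof
  show "(\<Union>i\<in>{1..r}. hverts (P (i - 1))) \<subseteq> hverts HH"
  proof (rule UN_least)
    fix i assume "i \<in> {1..r}"
    hence "i - 1 < r" by auto
    thus "hverts (P (i - 1)) \<subseteq> hverts HH" using PV_sub[of "i-1"] unfolding P_def by simp
  qed
  show "hverts HH \<subseteq> (\<Union>i\<in>{1..r}. hverts (P (i - 1)))"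
  proof
    fix x assume x: "x \<in> hverts HH"
    have ex: "\<exists>k<r. x \<in> PV k"
    proof -
      have "x = F \<or> x \<in> slim H \<or> x \<in> hfat H" using x unfolding slim_def by auto
      moreover have ?thesis if "x = F" using that rpos unfolding PV_def by auto
      moreover have ?thesis if xs: "x \<in> slim H"
      proof -
        obtain a where a: "a<n" "x = g a" using slim_ex[OF xs] by blast
        obtain k where "k<r" "g a \<in> slim (P k)" using cover[OF a(1)] by blast
        thus ?thesis using a unfolding P_def slim_restr by blast
      qed
      moreover have ?thesis if xf: "x \<in> hfat H"
      proof -
        obtain y where y: "y \<in> slim H" "hadj H x y" using H_fatslim[OF xf] by blast
        have "x = phi y" using phi_uniq[OF y(1) xf] H_sym y(2) by blast
        obtain a where a: "a<n" "y = g a" using slim_ex[OF y(1)] by blast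
        obtain k where "k<r" "phi (g a) \<in> PV k" using cover[OF a(1)] by blast
        thus ?thesis using a \<open>x = phi y\<close> by blast
      qed
      ultimately show ?thesis by blast
    qed
    then obtain k where "k < r" "x \<in> PV k" by blast
    thus "x \<in> (\<Union>i\<in>{1..r}. hverts (P (i - 1)))" unfolding P_def
      by (intro UN_I[of "k+1"]) auto
  qed
qed

lemma cross: "k < r \<Longrightarrow> k' < r \<Longrightarrow> k \<noteq> k' \<Longrightarrow> x \<in> slim (P k) \<Longrightarrow> y \<in> slim (P k') \<Longrightarrow>
   card (fat_nbrs HH x \<inter> fat_nbrs HH y) \<le> 1 \<and>
   (card (fat_nbrs HH x \<inter> fat_nbrs HH y) = 1 \<longleftrightarrow> hadj HH x y)"
proof -
  assume k: "k < r" "k' < r" "k \<noteq> k'" and x: "x \<in> slim (P k)" and y: "y \<in> slim (P k')"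
  obtain a where a: "a < n" "x = g a" "pc a = k" using slimP_ex[OF k(1) x] by blast
  obtain b where b: "b < n" "y = g b" "pc b = k'" using slimP_ex[OF k(2) y] by blast
  have ab: "a \<noteq> b" using a b k by auto
  have xs: "x \<in> slim H" "y \<in> slim H" using a b g_in by auto
  have adj: "hadj HH x y = hadj H (g a) (g b)" using HH_adj_slim[OF xs] a b by simp
  show ?thesis
  proof (cases "a < r \<and> b < r")
    case True
    with K1[of a b] ab have h: "hadj H (g a) (g b)" "phi x \<noteq> phi y" using a b by auto
    have "fat_nbrs HH x \<inter> fat_nbrs HH y = {F}"
      using fn_HH[OF xs(1)] fn_HH[OF xs(2)] gR a b True h(2) phi_ne_F xs by auto
    thus ?thesis using adj h by simp
  next
    case False
    have "fat_nbrs HH x \<inter> fat_nbrs HH y = (if phi x = phi y then {phi x} else {})"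
      using fn_HH[OF xs(1)] fn_HH[OF xs(2)] gR a b False phi_ne_F xs by auto
    moreover have "hadj H (g a) (g b) \<longleftrightarrow> phi (g a) = phi (g b)"
      using K4[OF a(1) b(1) ab _ False] a b k by simp
    ultimately show ?thesis using adj a b by simp
  qed
qed

lemma decomp: "decomposition HH {1..r} (\<lambda>i. P (i - 1))"
  unfolding decomposition_def
proof (intro conjI)
  show "\<forall>i\<in>{1..r}. induced_hsub (P (i - 1)) HH" using P_induced by auto
  show "hverts HH = (\<Union>i\<in>{1..r}. hverts (P (i - 1)))" by (rule HH_cover)
  show "\<forall>i\<in>{1..r}. \<forall>j\<in>{1..r}. i \<noteq> j \<longrightarrow> slim (P (i - 1)) \<inter> slim (P (j - 1)) = {}"
  proof (intro ballI impI)
    fix i j assume ij: "i \<in> {1..r}" "j \<in> {1..r}" "i \<noteq> j"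
    show "slim (P (i - 1)) \<inter> slim (P (j - 1)) = {}"
    proof (rule ccontr)
      assume "slim (P (i - 1)) \<inter> slim (P (j - 1)) \<noteq> {}"
      then obtain x where "x \<in> slim (P (i - 1))" "x \<in> slim (P (j - 1))" by blast
      moreover have "i - 1 < r" "j - 1 < r" using ij by auto
      ultimately obtain a b where "a < n" "x = g a" "pc a = i - 1" "b < n" "x = g b" "pc b = j - 1"
        using slimP_ex[of "i-1" x] slimP_ex[of "j-1" x] by blast
      hence "i - 1 = j - 1" using g_eq by auto
      thus False using ij by auto
    qed
  qed
  show "\<forall>i\<in>{1..r}. \<forall>x\<in>slim (P (i - 1)). \<forall>y\<in>hfat HH. hadj HH x y \<longrightarrow> y \<in> hverts (P (i - 1))"
  proof (intro ballI impI)
    fix i x y assume i: "i \<in> {1..r}" and x: "x \<in> slim (P (i - 1))" and y: "y \<in> hfat HH" "hadj HH x y"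
    have k: "i - 1 < r" using i by auto
    have "y \<in> fat_nbrs HH x" using y unfolding fat_nbrs_def by auto
    moreover have "x = g (i-1) \<or> (i - 1 < p+q \<and> x = g (r + (i-1)))" using slim_P[OF k] x by (auto split: if_splits)
    ultimately show "y \<in> hverts (P (i - 1))" using fn_HH gk[OF k] grk unfolding P_def PV_def
      by (auto split: if_splits)
  qed
  show "\<forall>i\<in>{1..r}. \<forall>j\<in>{1..r}. i \<noteq> j \<longrightarrow> (\<forall>x\<in>slim (P (i - 1)). \<forall>y\<in>slim (P (j - 1)).
         card (fat_nbrs HH x \<inter> fat_nbrs HH y) \<le> 1 \<and>
         (card (fat_nbrs HH x \<inter> fat_nbrs HH y) = 1) = hadj HH x y)"
  proof (intro ballI impI)
    fix i j x y assume ij: "i \<in> {1..r}" "j \<in> {1..r}" "i \<noteq> j" and xy: "x \<in> slim (P (i - 1))" "y \<in> slim (P (j - 1))"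
    have "i - 1 < r" "j - 1 < r" "i - 1 \<noteq> j - 1" using ij by auto
    from cross[OF this xy] show "card (fat_nbrs HH x \<inter> fat_nbrs HH y) \<le> 1 \<and>
         (card (fat_nbrs HH x \<inter> fat_nbrs HH y) = 1) = hadj HH x y" by simp
  qed
qed

end

context QH begin

lemma iii_P: "k < r \<Longrightarrow> \<forall>x\<in>slim (P k). \<forall>y\<in>hfat HH. hadj HH x y \<longrightarrow> y \<in> hverts (P k)"
proof -
  assume k: "k < r"
  have "k + 1 \<in> {1..r}" using k by simp
  from decompD(4)[OF decomp, rule_format, OF this] show ?thesis by simp
qed

lemma BP: "k < r \<Longrightarrow> x \<in> slim (P k) \<Longrightarrow> y \<in> slim (P k) \<Longrightarrow> Bmat (P k) x y = Bmat HH x y"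
  using Bmat_sub[OF P_induced _ _ iii_P] by blast

lemma B_diag: "x \<in> slim H \<Longrightarrow> Bmat HH x x = (if x \<in> R then -2 else -1)"
  using HH_adj_slim[of x x] H_irr fn_HH[of x] phi_ne_F[of x] unfolding Bmat_def by simp

lemma B_p: "k < p \<Longrightarrow> Bmat HH (g k) (g (r+k)) = 1 \<and> Bmat HH (g (r+k)) (g k) = 1"
proof -
  assume k: "k < p"
  have kk: "k < r" "k < p+q" using k pqr by auto
  note a = gk[OF kk(1)] grk[OF kk(2)]
  have h: "hadj H (g k) (g (r+k))" "phi (g k) \<noteq> phi (g (r+k))" using K2[OF k] by auto
  have "fat_nbrs HH (g k) \<inter> fat_nbrs HH (g (r+k)) = {}"
    using fn_HH[of "g k"] fn_HH[of "g (r+k)"] a h(2) phi_ne_F by auto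
  thus ?thesis using h(1) H_sym HH_adj_slim a unfolding Bmat_def by (simp add: Int_commute)
qed

lemma B_q: "p \<le> k \<Longrightarrow> k < p+q \<Longrightarrow> Bmat HH (g k) (g (r+k)) = -1 \<and> Bmat HH (g (r+k)) (g k) = -1"
proof -
  assume k: "p \<le> k" "k < p+q"
  have kk: "k < r" using k pqr by auto
  note a = gk[OF kk(1)] grk[OF k(2)]
  have h: "\<not> hadj H (g k) (g (r+k))" "phi (g k) = phi (g (r+k))" using K3[OF k] by auto
  have "fat_nbrs HH (g k) \<inter> fat_nbrs HH (g (r+k)) = {phi (g k)}"
    using fn_HH[of "g k"] fn_HH[of "g (r+k)"] a h(2) phi_ne_F by auto
  moreover have "\<not> hadj HH (g k) (g (r+k))" "\<not> hadj HH (g (r+k)) (g k)"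
    using h(1) H_sym HH_adj_slim a by blast+
  ultimately show ?thesis unfolding Bmat_def by (simp add: Int_commute)
qed

lemma piece_bound: "k < r \<Longrightarrow> qf (P k) v \<ge> (-1 - golden_tau) * nq (P k) v"
proof -
  assume k: "k < r"
  show ?thesis
  proof (cases "k < p+q")
    case False
    hence sl: "slim (P k) = {g k}" using slim_P[OF k] by simp
    have "qf (P k) v = -2 * (v (g k))^2" unfolding qf_def sl
      using BP[OF k, of "g k" "g k"] B_diag[of "g k"] gk[OF k] sl by (simp add: power2_eq_square)
    moreover have "nq (P k) v = (v (g k))^2" unfolding nq_def sl by simp
    moreover have "golden_tau \<ge> 1" by (rule tau_pos)
    moreover have "(-1 - golden_tau) * (v (g k))^2 \<le> -2 * (v (g k))^2"
      using tau_pos by (intro mult_right_mono) auto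
    ultimately show ?thesis by simp
  next
    case True
    hence sl: "slim (P k) = {g k, g (r+k)}" using slim_P[OF k] by simp
    note a = gk[OF k] grk[OF True]
    have ne: "g k \<noteq> g (r+k)" using a by auto
    define s :: real where "s = (if k < p then 1 else -1)"
    have B: "Bmat (P k) (g k) (g k) = -2" "Bmat (P k) (g (r+k)) (g (r+k)) = -1"
      "Bmat (P k) (g k) (g (r+k)) = s" "Bmat (P k) (g (r+k)) (g k) = s"
      using BP[OF k] sl B_diag a B_p B_q True unfolding s_def by auto
    have "qf (P k) v = -2*(v (g k))^2 + 2*s*(v (g k))*(v (g (r+k))) - (v (g (r+k)))^2"
      unfolding qf_def sl using ne B by (simp add: power2_eq_square algebra_simps)
    moreover have "nq (P k) v = (v (g k))^2 + (v (g (r+k)))^2" unfolding nq_def sl using ne by simp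
    moreover have "s * s = 1" unfolding s_def by simp
    ultimately show ?thesis using quad[of s "v (g k)" "v (g (r+k))"] by simp
  qed
qed


lemma hiso_II: "k < r \<Longrightarrow> \<not> k < p+q \<Longrightarrow> hiso (P k) H_II"
proof -
  assume k: "k < r" "\<not> k < p+q"
  note a = gk[OF k(1)]
  define u where "u = g k"
  define f where "f = phi u"
  have uS: "u \<in> slim H" "u \<in> R" using a u_def by auto
  have fF: "f \<in> hfat H" "f \<notin> R" using phi_fat[OF uS(1)] phi_nR[OF uS(1)] f_def by auto
  have d: "u \<noteq> f" "u \<noteq> F" "f \<noteq> F" using uS fF slimD F_ns phi_ne_F by (auto simp: f_def)
  have ad: "hadj H u f" "hadj H f u" "\<not> hadj H u u" "\<not> hadj H f f"
    using phi_adj[OF uS(1)] H_sym H_irr f_def by auto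
  note nF = F_nadj F_nR
  have PVk: "PV k = {u, f, F}" unfolding PV_def u_def f_def using k by simp
  define \<psi> where "\<psi> z = (if z = u then 0 else if z = f then 1 else (2::nat))" for z
  show ?thesis unfolding hiso_def H_II_def P_def
  proof (intro exI[of _ \<psi>] conjI)
    show "bij_betw \<psi> (hverts (restr HH (PV k))) (hverts \<lparr>hverts = {0, 1, 2}, hfat = {1, 2}, hadj = edges_adj [(0, 1), (0, 2)]\<rparr>)"
      unfolding bij_betw_def inj_on_def using d by (auto simp: PVk \<psi>_def)
    show "\<forall>x\<in>hverts (restr HH (PV k)). (x \<in> hfat (restr HH (PV k))) = (\<psi> x \<in> hfat \<lparr>hverts = {0, 1, 2}, hfat = {1, 2}, hadj = edges_adj [(0, 1), (0, 2)]\<rparr>)"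
      using d uS fF slimD by (auto simp: PVk \<psi>_def)
    show "\<forall>x\<in>hverts (restr HH (PV k)). \<forall>y\<in>hverts (restr HH (PV k)).
       hadj (restr HH (PV k)) x y = hadj \<lparr>hverts = {0, 1, 2}, hfat = {1, 2}, hadj = edges_adj [(0, 1), (0, 2)]\<rparr> (\<psi> x) (\<psi> y)"
      using d uS fF ad nF by (auto simp: PVk \<psi>_def edges_adj_def)
  qed
qed


lemma hiso_XVI: "k < p \<Longrightarrow> hiso (P k) H_XVI"
proof -
  assume k0: "k < p"
  have k: "k < r" "k < p+q" using k0 pqr by auto
  define u where "u = g k"
  define w where "w = g (r+k)"
  define f where "f = phi u"
  define e where "e = phi w"
  have uS: "u \<in> slim H" "u \<in> R" using gk[OF k(1)] u_def by auto
  have wS: "w \<in> slim H" "w \<notin> R" using grk[OF k(2)] w_def by auto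
  have uw: "hadj H u w" "f \<noteq> e" using K2[OF k0] u_def w_def f_def e_def by auto
  have fF: "f \<in> hfat H" "f \<notin> R" "e \<in> hfat H" "e \<notin> R"
    using phi_fat uS wS phi_nR f_def e_def by auto
  have d: "u \<noteq> w" "u \<noteq> f" "u \<noteq> F" "u \<noteq> e" "w \<noteq> f" "w \<noteq> F" "w \<noteq> e" "f \<noteq> F" "f \<noteq> e" "F \<noteq> e"
    using uS wS fF uw slimD F_ns F_nf by auto
  have ad: "hadj H u f" "hadj H f u" "hadj H w e" "hadj H e w" "hadj H w u" "hadj H u w"
    "\<not> hadj H u u" "\<not> hadj H w w" "\<not> hadj H f f" "\<not> hadj H e e" "\<not> hadj H f e" "\<not> hadj H e f"
    "\<not> hadj H u e" "\<not> hadj H e u" "\<not> hadj H w f" "\<not> hadj H f w"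
    using phi_adj[OF uS(1)] phi_adj[OF wS(1)] H_sym H_irr f_def e_def uw H_ff fF
      phi_nadj[OF uS(1) fF(3)] phi_nadj[OF wS(1) fF(1)] by auto
  note nF = F_nadj F_nR
  have PVk: "PV k = {u, f, F, w, e}" unfolding PV_def u_def f_def w_def e_def using k by auto
  define \<psi> where "\<psi> z = (if z = u then 0 else if z = w then 1 else if z = f then 2 else if z = F then 3 else (4::nat))" for z
  show ?thesis unfolding hiso_def H_XVI_def P_def
  proof (intro exI[of _ \<psi>] conjI)
    show "bij_betw \<psi> (hverts (restr HH (PV k))) (hverts \<lparr>hverts = {0, 1, 2, 3, 4}, hfat = {2, 3, 4}, hadj = edges_adj [(0, 1), (0, 2), (0, 3), (1, 4)]\<rparr>)"
      unfolding bij_betw_def inj_on_def using d by (auto simp: PVk \<psi>_def)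
    show "\<forall>x\<in>hverts (restr HH (PV k)). (x \<in> hfat (restr HH (PV k))) = (\<psi> x \<in> hfat \<lparr>hverts = {0, 1, 2, 3, 4}, hfat = {2, 3, 4}, hadj = edges_adj [(0, 1), (0, 2), (0, 3), (1, 4)]\<rparr>)"
      using d uS wS fF slimD by (auto simp: PVk \<psi>_def)
    show "\<forall>x\<in>hverts (restr HH (PV k)). \<forall>y\<in>hverts (restr HH (PV k)).
       hadj (restr HH (PV k)) x y = hadj \<lparr>hverts = {0, 1, 2, 3, 4}, hfat = {2, 3, 4}, hadj = edges_adj [(0, 1), (0, 2), (0, 3), (1, 4)]\<rparr> (\<psi> x) (\<psi> y)"
      using d uS wS fF ad nF by (auto simp: PVk \<psi>_def edges_adj_def)
  qed
qed

lemma hiso_XVII: "p \<le> k \<Longrightarrow> k < p+q \<Longrightarrow> hiso (P k) H_XVII"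
proof -
  assume k0: "p \<le> k" "k < p+q"
  have k: "k < r" "k < p+q" using k0 pqr by auto
  define u where "u = g k"
  define w where "w = g (r+k)"
  define f where "f = phi u"
  have uS: "u \<in> slim H" "u \<in> R" using gk[OF k(1)] u_def by auto
  have wS: "w \<in> slim H" "w \<notin> R" using grk[OF k(2)] w_def by auto
  have uw: "\<not> hadj H u w" "phi w = f" using K3[OF k0] u_def w_def f_def by auto
  have fF: "f \<in> hfat H" "f \<notin> R"
    using phi_fat uS phi_nR f_def by auto
  have d: "u \<noteq> w" "u \<noteq> f" "u \<noteq> F" "w \<noteq> f" "w \<noteq> F" "f \<noteq> F"
    using uS wS fF slimD F_ns F_nf uw by (auto simp: u_def w_def g_eq)
  have ad: "hadj H u f" "hadj H f u" "hadj H w f" "hadj H f w" "\<not> hadj H w u" "\<not> hadj H u w"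
    "\<not> hadj H u u" "\<not> hadj H w w" "\<not> hadj H f f"
    using phi_adj[OF uS(1)] phi_adj[OF wS(1)] H_sym H_irr f_def uw H_ff fF by auto
  note nF = F_nadj F_nR
  have PVk: "PV k = {u, f, F, w}" unfolding PV_def u_def f_def w_def using k uw(2) w_def f_def u_def by auto
  define \<psi> where "\<psi> z = (if z = u then 0 else if z = w then 1 else if z = F then 2 else (3::nat))" for z
  show ?thesis unfolding hiso_def H_XVII_def P_def
  proof (intro exI[of _ \<psi>] conjI)
    show "bij_betw \<psi> (hverts (restr HH (PV k))) (hverts \<lparr>hverts = {0, 1, 2, 3}, hfat = {2, 3}, hadj = edges_adj [(0, 2), (0, 3), (1, 3)]\<rparr>)"
      unfolding bij_betw_def inj_on_def using d by (auto simp: PVk \<psi>_def)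
    show "\<forall>x\<in>hverts (restr HH (PV k)). (x \<in> hfat (restr HH (PV k))) = (\<psi> x \<in> hfat \<lparr>hverts = {0, 1, 2, 3}, hfat = {2, 3}, hadj = edges_adj [(0, 2), (0, 3), (1, 3)]\<rparr>)"
      using d uS wS fF slimD by (auto simp: PVk \<psi>_def)
    show "\<forall>x\<in>hverts (restr HH (PV k)). \<forall>y\<in>hverts (restr HH (PV k)).
       hadj (restr HH (PV k)) x y = hadj \<lparr>hverts = {0, 1, 2, 3}, hfat = {2, 3}, hadj = edges_adj [(0, 2), (0, 3), (1, 3)]\<rparr> (\<psi> x) (\<psi> y)"
      using d uS wS fF ad nF by (auto simp: PVk \<psi>_def edges_adj_def)
  qed
qed


lemma part1: "\<exists>H' Hs. hoffman_graph H' \<and> induced_hsub H H' \<and> slim H' = slim H \<and>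
            decomposition H' {1..r} Hs \<and>
            (\<forall>i \<in> {1..r}. hiso (Hs i) H_XVI \<or> hiso (Hs i) H_XVII \<or> hiso (Hs i) H_II)"
proof (intro exI[of _ HH] exI[of _ "\<lambda>i. P (i - 1)"] conjI)
  show "\<forall>i\<in>{1..r}. hiso (P (i - 1)) H_XVI \<or> hiso (P (i - 1)) H_XVII \<or> hiso (P (i - 1)) H_II"
  proof
    fix i assume "i \<in> {1..r}"
    hence k: "i - 1 < r" by auto
    show "hiso (P (i - 1)) H_XVI \<or> hiso (P (i - 1)) H_XVII \<or> hiso (P (i - 1)) H_II"
      using hiso_II[OF k] hiso_XVI[of "i-1"] hiso_XVII[of "i-1"] by (cases "i - 1 < p"; cases "i - 1 < p+q") auto
  qed
qed (use hoffman_HH induced_HH slim_HH decomp in auto)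

abbreviation "\<alpha> \<equiv> -1 - golden_tau"

lemma qf_HH: "\<forall>v. qf HH v \<ge> \<alpha> * nq HH v"
proof
  fix v
  show "qf HH v \<ge> \<alpha> * nq HH v"
  proof (rule decomp_qf[OF decomp hoffman_HH])
    show "\<forall>i\<in>{1..r}. \<forall>v. \<alpha> * nq (P (i - 1)) v \<le> qf (P (i - 1)) v"
    proof (intro ballI allI)
      fix i v assume "i \<in> {1..r}"
      hence k: "i - 1 < r" by auto
      show "\<alpha> * nq (P (i - 1)) v \<le> qf (P (i - 1)) v" using piece_bound[OF k] .
    qed
  qed simp
qed

lemma card_HH: "x \<in> slim H \<Longrightarrow> y \<in> slim H \<Longrightarrow>
   card (fat_nbrs HH x \<inter> fat_nbrs HH y) = card (fat_nbrs H x \<inter> fat_nbrs H y) + (if x \<in> R \<and> y \<in> R then 1 else 0)"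
proof -
  assume xy: "x \<in> slim H" "y \<in> slim H"
  have fx: "phi x \<noteq> F" "phi y \<noteq> F" using phi_ne_F xy by auto
  show ?thesis
  proof (cases "x \<in> R \<and> y \<in> R")
    case True
    hence "fat_nbrs HH x \<inter> fat_nbrs HH y = insert F (fat_nbrs H x \<inter> fat_nbrs H y)"
      using fn_HH[OF xy(1)] fn_HH[OF xy(2)] fn_phi[OF xy(1)] fn_phi[OF xy(2)] fx by auto
    moreover have "F \<notin> fat_nbrs H x \<inter> fat_nbrs H y" using fn_phi[OF xy(1)] fx by auto
    ultimately show ?thesis using True by (simp add: fn_phi[OF xy(1)])
  next
    case False
    hence "fat_nbrs HH x \<inter> fat_nbrs HH y = fat_nbrs H x \<inter> fat_nbrs H y"
      using fn_HH[OF xy(1)] fn_HH[OF xy(2)] fn_phi[OF xy(1)] fn_phi[OF xy(2)] fx by auto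
    thus ?thesis using False by simp
  qed
qed

lemma qf_H: "qf H v \<ge> qf HH v"
proof -
  define c where "c x = (if x \<in> R then v x else 0)" for x
  have B: "Bmat H x y = Bmat HH x y + (if x \<in> R \<and> y \<in> R then 1 else 0)" if "x \<in> slim H" "y \<in> slim H" for x y
    using card_HH[OF that] HH_adj_slim[OF that] unfolding Bmat_def by simp
  have "qf H v = (\<Sum>x\<in>slim H. \<Sum>y\<in>slim H. Bmat HH x y * v x * v y + c x * c y)"
    unfolding qf_def by (intro sum.cong refl) (simp add: B c_def algebra_simps)
  also have "\<dots> = qf HH v + (\<Sum>x\<in>slim H. \<Sum>y\<in>slim H. c x * c y)"
    unfolding qf_def slim_HH by (simp add: sum.distrib)
  also have "(\<Sum>x\<in>slim H. \<Sum>y\<in>slim H. c x * c y) = (\<Sum>x\<in>slim H. c x)^2"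
    by (simp add: power2_eq_square sum_product)
  finally show ?thesis by simp
qed

lemma lam_H: "lambda_min H \<ge> \<alpha>"
proof (rule lambda_min_ge[OF hg])
  show "slim H \<noteq> {}" using gk[OF rpos] by auto
  show "\<forall>v. \<alpha> * nq H v \<le> qf H v"
    using qf_HH qf_H unfolding nq_def slim_HH by (metis order_trans nq_def slim_HH)
qed

lemma part2: "r \<ge> 2 \<Longrightarrow> reducible \<alpha> H"
proof -
  assume r2: "r \<ge> 2"
  define M where "M J = restr HH (\<Union>i\<in>J. hverts (P (i - 1)))" for J
  define Hs where "Hs k = (if k = (1::nat) then M {1} else M {2..r})" for k
  have D: "decomposition HH {1,2} Hs"
    unfolding Hs_def M_def by (rule decomp_merge[OF decomp hoffman_HH]) (use r2 in auto)
  have sub1: "{1} \<subseteq> {1..r}" and sub2: "{2..r} \<subseteq> {1..r}" using r2 by auto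
  have piece: "lambda_min (Hs k) \<ge> \<alpha> \<and> slim (Hs k) \<inter> slim H \<noteq> {}" if k: "k \<in> {1,2}" for k
  proof -
    obtain J where J: "J \<subseteq> {1..r}" "Hs k = M J" and w: "\<exists>i\<in>J. i - 1 < r \<and> g (i - 1) \<in> slim (P (i - 1))"
    proof (cases "k = 1")
      case True
      thus ?thesis using that[OF sub1] slim_P[OF rpos] rpos unfolding Hs_def by auto
    next
      case False
      have "1 < r" using r2 by auto
      hence "g 1 \<in> slim (P 1)" using slim_P[of 1] by auto
      hence "\<exists>i\<in>{2..r}. i - 1 < r \<and> g (i - 1) \<in> slim (P (i - 1))"
        using r2 \<open>1 < r\<close> by (intro bexI[of _ 2]) auto
      thus ?thesis using that[OF sub2] False unfolding Hs_def by auto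
    qed
    note mp = merge_props[OF decomp hoffman_HH J(1), folded M_def]
    have ind: "induced_hsub (Hs k) HH" using mp J by simp
    have iii: "\<forall>x\<in>slim (Hs k). \<forall>y\<in>hfat HH. hadj HH x y \<longrightarrow> y \<in> hverts (Hs k)"
      using decompD(4)[OF D] k by blast
    have bnd: "\<forall>v. qf (Hs k) v \<ge> \<alpha> * nq (Hs k) v" by (rule qf_sub[OF ind hoffman_HH iii qf_HH])
    obtain i where i: "i \<in> J" "i - 1 < r" "g (i - 1) \<in> slim (P (i - 1))" using w by blast
    have gs: "g (i - 1) \<in> slim (Hs k)" using mp(2) J i by auto
    have "g (i - 1) \<in> slim H" using gk[OF i(2)] by auto
    moreover have "lambda_min (Hs k) \<ge> \<alpha>"
      by (rule lambda_min_ge[OF _ _ bnd]) (use ind gs in \<open>auto simp: induced_hsub_def\<close>)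
    ultimately show ?thesis using gs by auto
  qed
  show ?thesis unfolding reducible_def
    using lam_H hoffman_HH induced_HH D piece by blast
qed

end

theorem mainTheorem12:
  fixes H :: "'a hgraph" and p q r :: nat
  assumes inf: "infinite (UNIV :: 'a set)"
    and hg: "hoffman_graph H"
    and one_fat: "\<forall>x \<in> slim H. card (fat_nbrs H x) = 1"
    and pqr: "p + q \<le> r"
    and Q: "sgraph_iso (special_graph H) (Qgraph p q r)"
  shows "(\<exists>H' Hs. hoffman_graph H' \<and> induced_hsub H H' \<and> slim H' = slim H \<and>
            decomposition H' {1..r} Hs \<and>
            (\<forall>i \<in> {1..r}. hiso (Hs i) H_XVI \<or> hiso (Hs i) H_XVII \<or> hiso (Hs i) H_II))
         \<and> (r \<ge> 2 \<longrightarrow> reducible (-1 - golden_tau) H)"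
proof -
  obtain f where fb: "bij_betw f (slim H) {0..<r+p+q}"
    and fp: "\<forall>x \<in> slim H. \<forall>y \<in> slim H.
         (spos (special_graph H) x y \<longleftrightarrow> spos (Qgraph p q r) (f x) (f y)) \<and>
         (sneg (special_graph H) x y \<longleftrightarrow> sneg (Qgraph p q r) (f x) (f y))"
    using Q unfolding sgraph_iso_def special_graph_def Qgraph_def by auto
  show ?thesis
  proof (cases "r = 0")
    case True
    hence "slim H = {}" using fb pqr by (simp add: bij_betw_def)
    hence "hfat H = {}" using hg unfolding hoffman_graph_def by blast
    hence V: "hverts H = {}" using \<open>slim H = {}\<close> unfolding slim_def by blast
    have "induced_hsub H H" using hg V unfolding induced_hsub_def hoffman_graph_def by auto
    moreover have "decomposition H {1..r} (\<lambda>_. H)" using True V unfolding decomposition_def by simp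
    ultimately show ?thesis using hg True by auto
  next
    case False
    define g where "g = inv_into (slim H) f"
    have gb: "bij_betw g {0..<r+p+q} (slim H)" unfolding g_def by (rule bij_betw_inv_into[OF fb])
    have fg: "f (g a) = a" if "a < r+p+q" for a
      unfolding g_def using bij_betw_inv_into_right[OF fb] that by simp
    have gin: "g a \<in> slim H" if "a < r+p+q" for a using gb that by (auto dest: bij_betw_apply)
    have finV: "finite (hverts H)" using hg unfolding hoffman_graph_def by blast
    obtain F where F: "F \<notin> hverts H"
      using ex_new_if_finite[OF inf finV] by blast
    interpret QH H p q r g F
    proof
      show "\<forall>x\<in>slim H. card (fat_nbrs H x) = 1" by (rule one_fat)
      show "0 < r" using False by simp
      fix a b assume ab: "a < r+p+q" "b < r+p+q"
      have e: "(spos (special_graph H) (g a) (g b) \<longleftrightarrow> spos (Qgraph p q r) (f (g a)) (f (g b))) \<and>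
         (sneg (special_graph H) (g a) (g b) \<longleftrightarrow> sneg (Qgraph p q r) (f (g a)) (f (g b)))"
        using fp gin[OF ab(1)] gin[OF ab(2)] by blast
      show "spos (special_graph H) (g a) (g b) = spos (Qgraph p q r) a b"
        using e fg[OF ab(1)] fg[OF ab(2)] by simp
      show "sneg (special_graph H) (g a) (g b) = sneg (Qgraph p q r) a b"
        using e fg[OF ab(1)] fg[OF ab(2)] by simp
    qed (use hg pqr gb F in auto)
    show ?thesis using part1 part2 by blast
  qed
qed

end
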